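(* For $a=(a_0,\dots,a_{d-1})\in\mathbb{R}^d$ let $P(X)=X^d+\sum_{i=0}^{d-1}a_iX^i$, and let $\Gamma$ be the symmetric bilinear first-order differential operator on functions of $a$ (i.e. $\Gamma(f,g)=\sum_{i,j}\Gamma(a_i,a_j)\partial_{a_i}f\,\partial_{a_j}g$) determined by $$\sum_{i,j}X^iY^j\,\Gamma(a_i,a_j)=\frac{1}{Y-X}\big(P'(X)P(Y)-P'(Y)P(X)\big).$$ Let $\mathrm{disc}(P)$ denote the discriminant of $P$, a polynomial in $a$ which equals $\prod_{i<j}(x_j-x_i)^2$ when $x_1,\dots,x_d$ are the roots of $P$. Then, wherever $\mathrm{disc}(P)\neq0$, $$\Gamma\big(P(X),\log\mathrm{disc}(P)\big)=-P''(X),$$ where $\Gamma(f,\log g)$ means $\Gamma(f,g)/g$. *)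

theory Defs
  imports "HOL-Analysis.Analysis" "HOL-Computational_Algebra.Polynomial"
begin

definition Pol :: "nat \<Rightarrow> (nat \<Rightarrow> real) \<Rightarrow> real poly" where
  "Pol d a = monom 1 d + (\<Sum>i<d. monom (a i) i)"

definition roots_list :: "nat \<Rightarrow> (nat \<Rightarrow> real) \<Rightarrow> complex list" where
  "roots_list d a = (SOME xs. length xs = d \<and>
      map_poly complex_of_real (Pol d a) = (\<Prod>x\<leftarrow>xs. [:-x, 1:]))"

definition disc :: "nat \<Rightarrow> (nat \<Rightarrow> real) \<Rightarrow> real" where
  "disc d a = Re (let xs = roots_list d a in
      \<Prod>j<d. \<Prod>i<j. (xs ! j - xs ! i)^2)"

definition disc_partial :: "nat \<Rightarrow> (nat \<Rightarrow> real) \<Rightarrow> nat \<Rightarrow> real" where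
  "disc_partial d a j = deriv (\<lambda>t. disc d (a(j := t))) (a j)"

end

theory Submission
  imports Defs "HOL-Complex_Analysis.Complex_Analysis" "HOL-Computational_Algebra.Fundamental_Theorem_Algebra"
begin



lemma coeff_Pol: "coeff (Pol d b) k = (if k = d then 1 else if k < d then b k else 0)"
  unfolding Pol_def by (auto simp: coeff_sum coeff_monom)

lemma degree_Pol: "degree (Pol d b) = d"
  by (rule antisym) (auto intro!: degree_le le_degree simp: coeff_Pol)

abbreviation PC :: "nat \<Rightarrow> (nat \<Rightarrow> real) \<Rightarrow> complex poly" where
  "PC d b \<equiv> map_poly complex_of_real (Pol d b)"

lemma coeff_PC: "coeff (PC d b) k = (if k = d then 1 else if k < d then of_real (b k) else 0)"
  by (simp add: coeff_map_poly coeff_Pol)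

lemma degree_PC: "degree (PC d b) = d"
  by (rule antisym) (auto intro!: degree_le le_degree simp: coeff_PC)

lemma lead_coeff_PC: "lead_coeff (PC d b) = 1"
  by (simp add: degree_PC coeff_PC)

lemma poly_of_real_map: "poly (map_poly complex_of_real p) (of_real x) = of_real (poly p x)"
  by (induction p) (auto simp: map_poly_pCons)

lemma pderiv_of_real_map: "pderiv (map_poly complex_of_real p) = map_poly complex_of_real (pderiv p)"
  by (rule poly_eqI) (simp add: coeff_pderiv coeff_map_poly)

lemma proots_lin_list: "proots (\<Prod>x\<leftarrow>xs. [:-x, 1:]) = mset (xs :: complex list)"
proof (induction xs)
  case (Cons x xs)
  have "(\<Prod>x\<leftarrow>xs. [:-x, 1:]) \<noteq> (0::complex poly)"
    by (auto simp: prod_list_zero_iff)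
  then have "proots ([:-x,1:] * (\<Prod>x\<leftarrow>xs. [:-x, 1:])) = proots [:-x,1:] + proots (\<Prod>x\<leftarrow>xs. [:-x, 1:])"
    by (intro proots_mult) auto
  moreover have "proots [:-x,1:] = {#x#}" using proots_linear_factor[of "-x"] by simp
  ultimately show ?case using Cons by (simp only: prod_list.Cons list.map) simp
qed simp

lemma prod_list_map_upt: "(\<Prod>x\<leftarrow>map f [0..<n]. g x) = (\<Prod>i<n. g (f i))"
  by (induction n) auto

lemma roots_ex: "\<exists>xs. length xs = d \<and> PC d b = (\<Prod>x\<leftarrow>xs. [:-x, 1:])"
proof -
  obtain root where r: "smult (lead_coeff (PC d b)) (\<Prod>i<degree (PC d b). [:-root i, 1:]) = PC d b"
    by (rule complex_poly_decompose')
  show ?thesis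
    apply (rule exI[of _ "map root [0..<d]"])
    apply (subst prod_list_map_upt)
    using r by (simp add: degree_PC coeff_PC)
qed

lemma roots_list: "length (roots_list d b) = d" "PC d b = (\<Prod>x\<leftarrow>roots_list d b. [:-x, 1:])"
  using someI_ex[OF roots_ex[of d b]] unfolding roots_list_def by auto

lemma PC_nth: "PC d b = (\<Prod>i<d. [:-(roots_list d b ! i), 1:])"
proof -
  have "roots_list d b = map (\<lambda>i. roots_list d b ! i) [0..<d]"
    using roots_list(1)[of d b] map_nth[of "roots_list d b"] by metis
  then show ?thesis using roots_list(2)[of d b] prod_list_map_upt[where f="\<lambda>i. roots_list d b ! i" and n=d and g="\<lambda>x. [:-x,1:]"]
    by metis
qed

lemma pderiv_prod_at:
  fixes x :: "nat \<Rightarrow> complex"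
  assumes "k < n"
  shows "poly (pderiv (\<Prod>i<n. [:-x i,1:])) (x k) = (\<Prod>i\<in>{..<n}-{k}. (x k - x i))"
proof -
  have "poly (pderiv (\<Prod>i<n. [:-x i,1:])) (x k) = (\<Sum>a<n. \<Prod>i\<in>{..<n}-{a}. (x k - x i))"
    by (simp add: pderiv_prod poly_sum poly_prod pderiv_pCons)
  also have "\<dots> = (\<Prod>i\<in>{..<n}-{k}. (x k - x i))"
    using assms by (subst sum.remove[of _ k]) (auto intro!: sum.neutral simp: prod_zero_iff)
  finally show ?thesis .
qed

lemma sign_arith: "Suc n * (Suc n - 1) div 2 = n * (n - 1) div 2 + n"
proof -
  have "Suc n * (Suc n - 1) = n * (n - 1) + 2 * n" by (cases n) (auto simp: algebra_simps)
  then show ?thesis by simp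
qed

lemma T_D:
  fixes x :: "nat \<Rightarrow> complex"
  shows "(\<Prod>k<n. \<Prod>i\<in>{..<n}-{k}. (x k - x i)) = (-1)^(n*(n-1) div 2) * (\<Prod>j<n. \<Prod>i<j. (x j - x i)^2)"
proof (induction n)
  case 0
  then show ?case by simp
next
  case (Suc n)
  have A: "(\<Prod>k<Suc n. \<Prod>i\<in>{..<Suc n}-{k}. (x k - x i)) =
     (\<Prod>k<n. (x k - x n) * (\<Prod>i\<in>{..<n}-{k}. (x k - x i))) * (\<Prod>i<n. (x n - x i))"
  proof -
    have e1: "{..<Suc n} - {n} = {..<n}" by auto
    have e2: "k < n \<Longrightarrow> {..<Suc n} - {k} = insert n ({..<n} - {k})" for k by auto
    have "(\<Prod>k<n. \<Prod>i\<in>{..<Suc n}-{k}. (x k - x i)) = (\<Prod>k<n. (x k - x n) * (\<Prod>i\<in>{..<n}-{k}. (x k - x i)))"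
      by (intro prod.cong refl, subst e2) auto
    then show ?thesis
      by (simp add: e1)
  qed
  have B: "(\<Prod>k<n. (x k - x n)) = (-1)^n * (\<Prod>k<n. (x n - x k))"
  proof -
    have "(\<Prod>k<n. (x k - x n)) = (\<Prod>k<n. (-1::complex)) * (\<Prod>k<n. (x n - x k))"
      by (subst prod.distrib[symmetric]) (intro prod.cong; simp)
    then show ?thesis by simp
  qed
  have "(\<Prod>k<Suc n. \<Prod>i\<in>{..<Suc n}-{k}. (x k - x i)) =
      (\<Prod>k<n. \<Prod>i\<in>{..<n}-{k}. (x k - x i)) * ((-1)^n * (\<Prod>i<n. (x n - x i)^2))"
    unfolding A prod.distrib B by (simp add: power2_eq_square prod.distrib)
  also have "\<dots> = (-1)^(Suc n*(Suc n-1) div 2) * (\<Prod>j<Suc n. \<Prod>i<j. (x j - x i)^2)"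
    unfolding Suc.IH sign_arith by (simp add: power_add)
  finally show ?case .
qed

lemma disc_eq: "disc d b = Re ((-1)^(d*(d-1) div 2) * (\<Prod>k<d. poly (pderiv (PC d b)) (roots_list d b ! k)))"
proof -
  define x where "x = (\<lambda>i. roots_list d b ! i)"
  have "(\<Prod>k<d. poly (pderiv (PC d b)) (x k)) = (\<Prod>k<d. \<Prod>i\<in>{..<d}-{k}. (x k - x i))"
    unfolding PC_nth x_def[symmetric] by (intro prod.cong refl pderiv_prod_at) auto
  also have "\<dots> = (-1)^(d*(d-1) div 2) * (\<Prod>j<d. \<Prod>i<j. (x j - x i)^2)" by (rule T_D)
  finally have "(-1)^(d*(d-1) div 2) * (\<Prod>k<d. poly (pderiv (PC d b)) (x k)) = 
    ((-1)^(d*(d-1) div 2))^2 * (\<Prod>j<d. \<Prod>i<j. (x j - x i)^2)" by (simp add: power2_eq_square)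
  also have "((-1::complex)^(d*(d-1) div 2))^2 = 1" by (simp flip: power_mult add: power_mult_distrib)
  finally show ?thesis unfolding disc_def x_def Let_def by simp
qed




lemma logderiv:
  fixes x :: "nat \<Rightarrow> complex"
  assumes "\<forall>k<n. z \<noteq> x k"
  shows "poly (pderiv (\<Prod>i<n. [:-x i,1:])) z = poly (\<Prod>i<n. [:-x i,1:]) z * (\<Sum>k<n. 1/(z - x k)) \<and>
    (poly (pderiv (\<Prod>i<n. [:-x i,1:])) z)^2 - poly (\<Prod>i<n. [:-x i,1:]) z * poly (pderiv (pderiv (\<Prod>i<n. [:-x i,1:]))) z
     = (poly (\<Prod>i<n. [:-x i,1:]) z)^2 * (\<Sum>k<n. 1/(z-x k)^2)"
  using assms
proof (induction n)
  case 0
  then show ?case by simp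
next
  case (Suc n)
  define R where "R = (\<Prod>i<n. [:-x i,1:])"
  define r where "r = poly R z"
  define r1 where "r1 = poly (pderiv R) z"
  define r2 where "r2 = poly (pderiv (pderiv R)) z"
  define L where "L = z - x n"
  have L: "L \<noteq> 0" using Suc.prems L_def by auto
  have IH: "r1 = r * (\<Sum>k<n. 1/(z - x k))" "r1^2 - r * r2 = r^2 * (\<Sum>k<n. 1/(z-x k)^2)"
    using Suc by (auto simp: r_def r1_def r2_def R_def)
  have p: "(\<Prod>i<Suc n. [:-x i,1:]) = R * [:-x n, 1:]" by (simp add: R_def)
  have dq: "pderiv [:-x n, 1:] = 1" by (simp add: pderiv_pCons)
  have dp: "pderiv (R * [:-x n, 1:]) = R + pderiv R * [:-x n, 1:]"
    by (subst pderiv_mult) (simp only: dq mult_1_right mult_1_left add.commute mult.commute)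
  have ddp: "pderiv (pderiv (R * [:-x n, 1:])) = 2 * pderiv R + pderiv (pderiv R) * [:-x n, 1:]"
    unfolding dp pderiv_add by (subst pderiv_mult) (simp only: dq mult_1_right mult_1_left mult_2 mult_2_right add.assoc mult.commute)
  have e0: "poly (\<Prod>i<Suc n. [:-x i,1:]) z = r * L" unfolding p by (simp add: r_def L_def algebra_simps)
  have e1: "poly (pderiv (\<Prod>i<Suc n. [:-x i,1:])) z = r + r1 * L"
    unfolding p dp by (simp add: r_def r1_def L_def algebra_simps)
  have e2: "poly (pderiv (pderiv (\<Prod>i<Suc n. [:-x i,1:]))) z = 2 * r1 + r2 * L"
    unfolding p ddp by (simp add: r1_def r2_def L_def algebra_simps)
  have s1: "(\<Sum>k<Suc n. 1/(z - x k)) = (\<Sum>k<n. 1/(z - x k)) + 1/L" by (simp add: L_def)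
  have s2: "(\<Sum>k<Suc n. 1/(z - x k)^2) = (\<Sum>k<n. 1/(z - x k)^2) + 1/L^2" by (simp add: L_def)
  show ?case unfolding e0 e1 e2 s1 s2
  proof
    show "r + r1 * L = r * L * ((\<Sum>k<n. 1 / (z - x k)) + 1 / L)"
      using L unfolding IH(1) by (simp add: field_simps)
    have "(r + r1 * L)\<^sup>2 - r * L * (2 * r1 + r2 * L) = r^2 + L^2 * (r1^2 - r * r2)"
      by (simp add: power2_eq_square algebra_simps)
    also have "\<dots> = (r * L)\<^sup>2 * ((\<Sum>k<n. 1 / (z - x k)\<^sup>2) + 1 / L\<^sup>2)"
      using L unfolding IH(2) by (simp add: field_simps power2_eq_square)
    finally show "(r + r1 * L)\<^sup>2 - r * L * (2 * r1 + r2 * L) = (r * L)\<^sup>2 * ((\<Sum>k<n. 1 / (z - x k)\<^sup>2) + 1 / L\<^sup>2)" .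
  qed
qed




lemma per_k_alg:
  fixes K K1 PX P1X pk qk xk Xc :: complex
  assumes e1: "(xk - Xc) * K = - PX * pk" and e2: "K + (xk - Xc) * K1 = P1X * pk - PX * qk"
    and pk: "pk \<noteq> 0" and ne: "xk \<noteq> Xc"
  shows "-qk / pk^2 * K + K1 / pk = - P1X / (Xc - xk) + PX / (Xc - xk)^2"
proof -
  define u where "u = Xc - xk"
  have u: "u \<noteq> 0" using ne u_def by auto
  have m: "xk - Xc = - u" using u_def by simp
  have K: "K = PX * pk / u" using e1 u unfolding m by (simp add: field_simps)
  have K1: "K1 = (K - P1X * pk + PX * qk) / u" using e2 u unfolding m by (simp add: field_simps)
  have "-qk / pk^2 * K + K1 / pk = -qk / pk^2 * (PX * pk / u) + ((PX * pk / u) - P1X * pk + PX * qk) / u / pk"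
    unfolding K1 K ..
  also have "\<dots> = - P1X / u + PX / u^2"
    using u pk by (simp add: field_simps power2_eq_square)
  finally show ?thesis unfolding u_def .
qed

lemma poly_eq_on_reals:
  fixes p q :: "complex poly"
  assumes "\<And>y::real. poly p (of_real y) = poly q (of_real y)"
  shows "p = q"
proof (rule ccontr)
  assume "p \<noteq> q"
  then have "p - q \<noteq> 0" by simp
  then have "finite {z. poly (p - q) z = 0}" by (rule poly_roots_finite)
  moreover have "range complex_of_real \<subseteq> {z. poly (p - q) z = 0}" using assms by auto
  moreover have "infinite (range complex_of_real)"
    by (metis finite_imageD inj_of_real infinite_UNIV_char_0)
  ultimately show False using finite_subset by blast
qed




definition Kc :: "nat \<Rightarrow> (nat \<Rightarrow> nat \<Rightarrow> real) \<Rightarrow> real \<Rightarrow> complex poly" where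
  "Kc d G X = (\<Sum>j<d. smult (of_real (\<Sum>i<d. G i j * X^i)) (monom 1 j))"

lemma gamma_poly:
  assumes Gamma: "\<forall>X Y :: real. (Y - X) * (\<Sum>i<d. \<Sum>j<d. G i j * X ^ i * Y ^ j)
      = poly (pderiv (Pol d a)) X * poly (Pol d a) Y - poly (pderiv (Pol d a)) Y * poly (Pol d a) X"
  shows "[:-of_real X, 1:] * Kc d G X = smult (of_real (poly (pderiv (Pol d a)) X)) (PC d a)
     - smult (of_real (poly (Pol d a) X)) (pderiv (PC d a))"
proof (rule poly_eq_on_reals)
  fix y :: real
  have sw: "(\<Sum>i<d. \<Sum>j<d. G i j * X^i * y^j) = (\<Sum>j<d. (\<Sum>i<d. G i j * X^i) * y^j)"
    by (subst sum.swap) (simp add: sum_distrib_right)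
  have k1: "poly ([:-of_real X, 1:] * Kc d G X) (of_real y) = (of_real y - of_real X) * poly (Kc d G X) (of_real y)"
    by (simp add: left_diff_distrib)
  have k2: "poly (Kc d G X) (of_real y) = of_real (\<Sum>j<d. (\<Sum>i<d. G i j * X^i) * y^j)"
    by (simp add: Kc_def poly_sum poly_monom)
  have "poly ([:-of_real X, 1:] * Kc d G X) (of_real y) = of_real ((y - X) * (\<Sum>j<d. (\<Sum>i<d. G i j * X^i) * y^j))"
    unfolding k1 k2 by simp
  also have "\<dots> = of_real (poly (pderiv (Pol d a)) X * poly (Pol d a) y - poly (pderiv (Pol d a)) y * poly (Pol d a) X)"
  proof -
    have g: "(y - X) * (\<Sum>i<d. \<Sum>j<d. G i j * X^i * y^j) = poly (pderiv (Pol d a)) X * poly (Pol d a) y - poly (pderiv (Pol d a)) y * poly (Pol d a) X"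
      using Gamma by blast
    show ?thesis unfolding g[unfolded sw] ..
  qed
  also have "\<dots> = poly (smult (of_real (poly (pderiv (Pol d a)) X)) (PC d a)
     - smult (of_real (poly (Pol d a) X)) (pderiv (PC d a))) (of_real y)"
    by (simp add: poly_of_real_map pderiv_of_real_map)
  finally show "poly ([:-of_real X, 1:] * Kc d G X) (of_real y) = poly (smult (of_real (poly (pderiv (Pol d a)) X)) (PC d a)
     - smult (of_real (poly (Pol d a) X)) (pderiv (PC d a))) (of_real y)" .
qed




lemma poly_Kc: "poly (Kc d G X) z = (\<Sum>j<d. of_real (\<Sum>i<d. G i j * X^i) * z^j)"
  by (simp add: Kc_def poly_sum poly_monom)

lemma pderiv_sum': "pderiv (sum f A) = (\<Sum>a\<in>A. pderiv (f a))"
  by (induction A rule: infinite_finite_induct) (auto simp: pderiv_add)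

lemma poly_dKc: "poly (pderiv (Kc d G X)) z = (\<Sum>j<d. of_real (\<Sum>i<d. G i j * X^i) * poly (pderiv (monom 1 j)) z)"
  by (simp add: Kc_def poly_sum pderiv_sum' pderiv_smult)

lemma key_identity:
  fixes x :: "nat \<Rightarrow> complex"
  assumes Gamma: "\<forall>X Y :: real. (Y - X) * (\<Sum>i<d. \<Sum>j<d. G i j * X ^ i * Y ^ j)
      = poly (pderiv (Pol d a)) X * poly (Pol d a) Y - poly (pderiv (Pol d a)) Y * poly (Pol d a) X"
  and roots: "PC d a = (\<Prod>i<d. [:-x i,1:])"
  and nzd: "\<forall>k<d. poly (pderiv (PC d a)) (x k) \<noteq> 0"
  and PXnz: "poly (Pol d a) X \<noteq> 0"
  shows "(\<Sum>j<d. of_real (\<Sum>i<d. G i j * X^i) * (\<Sum>k<d. (poly (pderiv (pderiv (PC d a))) (x k) * (-(x k ^ j) / poly (pderiv (PC d a)) (x k)) + poly (pderiv (monom 1 j)) (x k)) / poly (pderiv (PC d a)) (x k)))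
     = - of_real (poly (pderiv (pderiv (Pol d a))) X)"
proof -
  define Xc where "Xc = complex_of_real X"
  define c where "c j = complex_of_real (\<Sum>i<d. G i j * X^i)" for j
  define p where "p k = poly (pderiv (PC d a)) (x k)" for k
  define q where "q k = poly (pderiv (pderiv (PC d a))) (x k)" for k
  define M where "M j z = poly (pderiv (monom 1 j)) (z::complex)" for j z
  define K where "K k = poly (Kc d G X) (x k)" for k
  define K1 where "K1 k = poly (pderiv (Kc d G X)) (x k)" for k
  define PX where "PX = complex_of_real (poly (Pol d a) X)"
  define P1X where "P1X = complex_of_real (poly (pderiv (Pol d a)) X)"
  define P2X where "P2X = complex_of_real (poly (pderiv (pderiv (Pol d a))) X)"
  have PX0: "PX \<noteq> 0" using PXnz PX_def by simp
  have Pxk: "poly (PC d a) (x k) = 0" if "k < d" for k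
    unfolding roots using that by (auto simp: poly_prod prod_zero_iff)
  have PXc: "poly (PC d a) Xc = PX" unfolding Xc_def PX_def by (rule poly_of_real_map)
  have P1Xc: "poly (pderiv (PC d a)) Xc = P1X" unfolding Xc_def P1X_def pderiv_of_real_map by (rule poly_of_real_map)
  have P2Xc: "poly (pderiv (pderiv (PC d a))) Xc = P2X" unfolding Xc_def P2X_def pderiv_of_real_map by (rule poly_of_real_map)
  have ne: "x k \<noteq> Xc" if "k < d" for k using Pxk[OF that] PXc PX0 by auto
  have gp: "[:-Xc, 1:] * Kc d G X = smult P1X (PC d a) - smult PX (pderiv (PC d a))"
    unfolding Xc_def P1X_def PX_def by (rule gamma_poly[OF Gamma])
  have E1: "(x k - Xc) * K k = - PX * p k" if "k < d" for k
  proof -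
    have "poly ([:-Xc, 1:] * Kc d G X) (x k) = poly (smult P1X (PC d a) - smult PX (pderiv (PC d a))) (x k)"
      by (simp only: gp)
    then show ?thesis using Pxk[OF that] by (simp add: K_def p_def algebra_simps)
  qed
  have E2: "K k + (x k - Xc) * K1 k = P1X * p k - PX * q k" if "k < d" for k
  proof -
    have "poly (pderiv ([:-Xc, 1:] * Kc d G X)) (x k) = poly (pderiv (smult P1X (PC d a) - smult PX (pderiv (PC d a)))) (x k)"
      by (simp only: gp)
    then show ?thesis by (simp add: pderiv_mult pderiv_diff pderiv_smult pderiv_pCons K_def K1_def p_def q_def algebra_simps)
  qed
  have inner: "(\<Sum>j<d. c j * ((q k * (-(x k ^ j) / p k) + M j (x k)) / p k)) = -q k / (p k)^2 * K k + K1 k / p k"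
    if "k < d" for k
  proof -
    have pk: "p k \<noteq> 0" using nzd that p_def by auto
    have "(\<Sum>j<d. c j * ((q k * (-(x k ^ j) / p k) + M j (x k)) / p k)) =
          (\<Sum>j<d. (-q k / (p k)^2) * (c j * x k ^ j) + (1 / p k) * (c j * M j (x k)))"
      using pk by (intro sum.cong refl) (simp add: field_simps power2_eq_square)
    also have "\<dots> = (-q k / (p k)^2) * (\<Sum>j<d. c j * x k ^ j) + (1 / p k) * (\<Sum>j<d. c j * M j (x k))"
      by (simp only: sum.distrib sum_distrib_left)
    also have "\<dots> = -q k / (p k)^2 * K k + K1 k / p k"
      by (simp add: K_def K1_def poly_Kc poly_dKc c_def M_def)
    finally show ?thesis .
  qed
  have "(\<Sum>j<d. c j * (\<Sum>k<d. (q k * (-(x k ^ j) / p k) + M j (x k)) / p k))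
      = (\<Sum>k<d. \<Sum>j<d. c j * ((q k * (-(x k ^ j) / p k) + M j (x k)) / p k))"
    unfolding sum_distrib_left by (rule sum.swap)
  also have "\<dots> = (\<Sum>k<d. -q k / (p k)^2 * K k + K1 k / p k)"
    by (intro sum.cong refl inner) auto
  also have "\<dots> = (\<Sum>k<d. - P1X / (Xc - x k) + PX / (Xc - x k)^2)"
    using E1 E2 nzd ne by (intro sum.cong refl per_k_alg) (auto simp: p_def)
  also have "\<dots> = - P1X * (\<Sum>k<d. 1 / (Xc - x k)) + PX * (\<Sum>k<d. 1 / (Xc - x k)^2)"
    by (simp add: sum.distrib sum_distrib_left sum_negf sum_subtractf)
  also have "\<dots> = - P2X"
  proof -
    have ld: "\<forall>k<d. Xc \<noteq> x k" using ne by auto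
    note L = logderiv[OF ld]
    have l1: "P1X = PX * (\<Sum>k<d. 1 / (Xc - x k))" using conjunct1[OF L] unfolding roots[symmetric] PXc P1Xc .
    have l2: "P1X^2 - PX * P2X = PX^2 * (\<Sum>k<d. 1 / (Xc - x k)^2)"
      using conjunct2[OF L] unfolding roots[symmetric] PXc P1Xc P2Xc .
    have s1: "(\<Sum>k<d. 1 / (Xc - x k)) = P1X / PX" using l1 PX0 by (simp add: eq_divide_eq mult.commute)
    have s2: "(\<Sum>k<d. 1 / (Xc - x k)^2) = (P1X^2 - PX * P2X) / PX^2" using l2 PX0 by (simp add: eq_divide_eq mult.commute)
    show ?thesis unfolding s1 s2 using PX0 by (simp add: field_simps power2_eq_square)
  qed
  finally show ?thesis unfolding c_def p_def q_def M_def P2X_def .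
qed




lemma root_fun:
  fixes P :: "complex poly" and j :: nat and x0 :: complex
  assumes P0: "poly P x0 = 0" and P1: "poly (pderiv P) x0 \<noteq> 0"
  shows "\<exists>g. g 0 = x0 \<and> (g has_field_derivative (-(x0^j) / poly (pderiv P) x0)) (at 0)
           \<and> eventually (\<lambda>w. poly P (g w) + w * (g w)^j = 0) (nhds 0)"
proof (cases "x0^j = 0")
  case True
  then have x0: "x0 = 0" "j > 0" by (auto simp: power_0_left split: if_splits)
  show ?thesis
    by (rule exI[of _ "\<lambda>_. 0"]) (use x0 P0 in \<open>auto simp: power_0_left\<close>)
next
  case False
  define S where "S = {z::complex. z^j \<noteq> 0}"
  have oS: "open S" unfolding S_def by (rule open_Collect_neq) (auto intro!: continuous_intros)
  have x0S: "x0 \<in> S" using False S_def by auto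
  define h where "h z = - poly P z / z^j" for z
  define h' where "h' z = - ((poly (pderiv P) z * z^j - poly P z * (of_nat j * z^(j-1))) / (z^j)^2)" for z
  have dh: "(h has_field_derivative h' z) (at z)" if "z \<in> S" for z
  proof -
    have "((\<lambda>z. poly P z / z^j) has_field_derivative
       ((poly (pderiv P) z * z^j - poly P z * (of_nat j * z^(j-1))) / (z^j * z^j))) (at z)"
    proof (rule DERIV_divide)
      show "((\<lambda>z. z^j) has_field_derivative of_nat j * z^(j-1)) (at z)"
        using DERIV_power[OF DERIV_ident, of j z UNIV] by simp
    qed (use that S_def in auto)
    then show ?thesis unfolding h_def h'_def using DERIV_minus by (simp add: power2_eq_square)
  qed
  have holS: "h holomorphic_on S"
    using oS dh by (auto simp: holomorphic_on_open)
  have dhx0: "deriv h x0 = - poly (pderiv P) x0 / x0^j"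
  proof -
    have "deriv h x0 = h' x0" using DERIV_imp_deriv[OF dh[OF x0S]] .
    also have "\<dots> = - (poly (pderiv P) x0 * x0^j / (x0^j * x0^j))" using P0 by (simp add: h'_def power2_eq_square)
    also have "\<dots> = - poly (pderiv P) x0 / x0^j" using False by simp
    finally show ?thesis .
  qed
  have dnz: "deriv h x0 \<noteq> 0" using dhx0 P1 False by simp
  obtain r where r: "r > 0" "ball x0 r \<subseteq> S" "inj_on h (ball x0 r)"
    using has_complex_derivative_locally_injective[OF holS x0S oS dnz] by blast
  have holB: "h holomorphic_on ball x0 r" using holS r(2) holomorphic_on_subset by blast
  obtain g where g: "g holomorphic_on (h ` ball x0 r)"
    "\<And>z. z \<in> ball x0 r \<Longrightarrow> deriv h z * deriv g (h z) = 1"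
    "\<And>z. z \<in> ball x0 r \<Longrightarrow> g (h z) = z"
    using holomorphic_has_inverse[OF holB open_ball r(3)] by blast
  have oI: "open (h ` ball x0 r)" using open_mapping_thm3[OF holB open_ball r(3)] .
  have hx0: "h x0 = 0" using P0 h_def by simp
  have x0B: "x0 \<in> ball x0 r" using r by simp
  have zI: "0 \<in> h ` ball x0 r" using hx0 x0B by force
  have g0: "g 0 = x0" using g(3)[OF x0B] hx0 by simp
  have dg: "(g has_field_derivative deriv g 0) (at 0)"
    using holomorphic_derivI[OF g(1) oI zI] .
  have dg0: "deriv g 0 = -(x0^j) / poly (pderiv P) x0"
  proof -
    have "deriv h x0 * deriv g 0 = 1" using g(2)[OF x0B] hx0 by simp
    then have "(- poly (pderiv P) x0 / x0^j) * deriv g 0 = 1" using dhx0 by simp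
    then show ?thesis using False P1 by (simp add: field_simps) (metis add.inverse_inverse minus_mult_left)
  qed
  have ev: "eventually (\<lambda>w. w \<in> h ` ball x0 r) (nhds 0)"
    using eventually_nhds_in_open[OF oI zI] .
  have "eventually (\<lambda>w. poly P (g w) + w * (g w)^j = 0) (nhds 0)"
  proof (rule eventually_mono[OF ev])
    fix w assume "w \<in> h ` ball x0 r"
    then obtain z where z: "z \<in> ball x0 r" "w = h z" by blast
    have gw: "g w = z" using g(3)[OF z(1)] z(2) by simp
    have "z \<in> S" using z(1) r(2) by blast
    then have "z^j \<noteq> 0" unfolding S_def by simp
    then have "poly P z + h z * z^j = 0" by (simp add: h_def)
    then show "poly P (g w) + w * (g w)^j = 0" using gw z(2) by simp
  qed
  then show ?thesis using g0 dg dg0 by auto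
qed




lemma mset_roots_eq:
  fixes rl ys :: "complex list"
  assumes Q: "Q = (\<Prod>x\<leftarrow>rl. [:-x,1:])" and dys: "distinct ys" and rts: "\<forall>y\<in>set ys. poly Q y = 0"
    and len: "length ys = length rl"
  shows "mset rl = mset ys"
proof -
  have Q0: "Q \<noteq> 0" unfolding Q by (auto simp: prod_list_zero_iff)
  have pr: "proots Q = mset rl" unfolding Q by (rule proots_lin_list)
  have sub: "mset ys \<subseteq># proots Q"
  proof (rule mset_subset_eqI)
    fix y
    show "count (mset ys) y \<le> count (proots Q) y"
    proof (cases "y \<in> set ys")
      case True
      then have "count (mset ys) y = 1" using dys by (simp add: distinct_count_atmost_1)
      moreover have "order y Q \<noteq> 0" using rts True Q0 order_root by blast
      ultimately show ?thesis using Q0 by simp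
    next
      case False
      have "count (mset ys) y = 0" using False by (metis count_eq_zero_iff set_mset_mset)
      then show ?thesis by linarith
    qed
  qed
  have "size (proots Q - mset ys) = 0" using size_Diff_submset[OF sub] pr len by simp
  then have "proots Q - mset ys = {#}" by simp
  then have "proots Q = mset ys" using subset_mset.add_diff_inverse[OF sub] by simp
  then show ?thesis using pr by simp
qed

lemma PC_upd:
  assumes "j < d"
  shows "PC d (a(j:=t)) = PC d a + smult (of_real (t - a j)) (monom 1 j)"
  by (rule poly_eqI) (use assms in \<open>auto simp: coeff_PC coeff_monom\<close>)

lemma prod_nth_mset:
  assumes "length xs = n" "mset xs = mset ys" "length ys = n"
  shows "(\<Prod>k<n. f (xs ! k)) = (\<Prod>k<n. (f (ys ! k)::complex))"
proof -
  have "(\<Prod>k<n. f (xs ! k)) = prod_list (map f xs)"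
    using prod_list_map_upt[where f="\<lambda>k. xs ! k" and n=n and g=f] map_nth[of xs] assms(1) by metis
  also have "\<dots> = prod_mset (image_mset f (mset xs))" by (metis prod_mset_prod_list mset_map)
  also have "\<dots> = prod_list (map f ys)" using assms(2) by (metis prod_mset_prod_list mset_map)
  also have "\<dots> = (\<Prod>k<n. f (ys ! k))"
    using prod_list_map_upt[where f="\<lambda>k. ys ! k" and n=n and g=f] map_nth[of ys] assms(3) by metis
  finally show ?thesis .
qed




lemma partial_formula:
  assumes nz: "disc d a \<noteq> 0" and j: "j < d"
  defines "x \<equiv> \<lambda>k. roots_list d a ! k"
  and "p \<equiv> \<lambda>k. poly (pderiv (PC d a)) (roots_list d a ! k)"
  and "q \<equiv> \<lambda>k. poly (pderiv (pderiv (PC d a))) (roots_list d a ! k)"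
  and "c \<equiv> (-1::complex)^(d*(d-1) div 2)"
  shows "disc_partial d a j = Re (c * (\<Prod>k<d. p k) *
     (\<Sum>k<d. (q k * (-(x k ^ j) / p k) + poly (pderiv (monom 1 j)) (x k)) / p k))"
proof -
  have p_x: "p = (\<lambda>k. poly (pderiv (PC d a)) (x k))" unfolding p_def x_def ..
  have q_x: "q = (\<lambda>k. poly (pderiv (pderiv (PC d a))) (x k))" unfolding q_def x_def ..
  define Pc where "Pc = PC d a"
  define Mj where "Mj = (monom 1 j :: complex poly)"
  have PCx: "Pc = (\<Prod>i<d. [:-x i,1:])" unfolding Pc_def x_def by (rule PC_nth)
  have disc0: "disc d a = Re (c * (\<Prod>k<d. p k))" unfolding c_def p_x x_def by (rule disc_eq)
  have pnz: "p k \<noteq> 0" if "k < d" for k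
  proof -
    have "(\<Prod>k<d. p k) \<noteq> 0"
    proof
      assume h: "(\<Prod>k<d. p k) = 0"
      have "disc d a = 0" using disc0 unfolding h by simp
      then show False using nz by simp
    qed
    then show ?thesis using that by (auto simp: prod_zero_iff)
  qed
  have dist: "x k \<noteq> x l" if "k < d" "l < d" "k \<noteq> l" for k l
  proof
    assume e: "x k = x l"
    have "p k = (\<Prod>i\<in>{..<d}-{k}. (x k - x i))"
      unfolding p_x PC_nth[of d a, folded x_def] using that by (intro pderiv_prod_at) 
    also have "\<dots> = 0" using that e by (auto simp: prod_zero_iff)
    finally show False using pnz that by simp
  qed
  have root: "poly Pc (x k) = 0" if "k < d" for k
    unfolding PCx using that by (auto simp: poly_prod prod_zero_iff)
  have "\<forall>k. \<exists>g. k < d \<longrightarrow> (g 0 = x k \<and> (g has_field_derivative (-(x k^j) / p k)) (at 0)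
           \<and> eventually (\<lambda>w. poly Pc (g w) + w * (g w)^j = 0) (nhds 0))"
  proof
    fix k
    show "\<exists>g. k < d \<longrightarrow> (g 0 = x k \<and> (g has_field_derivative (-(x k^j) / p k)) (at 0)
           \<and> eventually (\<lambda>w. poly Pc (g w) + w * (g w)^j = 0) (nhds 0))"
    proof (cases "k < d")
      case True
      show ?thesis using root_fun[OF root[OF True], of j] pnz[OF True] unfolding p_x Pc_def by blast
    qed simp
  qed
  then obtain gg where gg': "\<forall>k. k < d \<longrightarrow> (gg k 0 = x k \<and> (gg k has_field_derivative (-(x k^j) / p k)) (at 0)
           \<and> eventually (\<lambda>w. poly Pc (gg k w) + w * (gg k w)^j = 0) (nhds 0))"
    by (rule choice[THEN exE])
  have gg: "\<And>k. k < d \<Longrightarrow> gg k 0 = x k \<and> (gg k has_field_derivative (-(x k^j) / p k)) (at 0)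
           \<and> eventually (\<lambda>w. poly Pc (gg k w) + w * (gg k w)^j = 0) (nhds 0)"
    using gg' by simp
  define E where "E w = ((\<forall>k\<in>{..<d}. poly Pc (gg k w) + w * (gg k w)^j = 0) \<and>
      (\<forall>k\<in>{..<d}. \<forall>l\<in>{..<d}. k \<noteq> l \<longrightarrow> gg k w \<noteq> gg l w))" for w
  have ev1: "eventually (\<lambda>w. \<forall>k\<in>{..<d}. poly Pc (gg k w) + w * (gg k w)^j = 0) (nhds 0)"
    using gg by (intro eventually_ball_finite) auto
  have ne_pair: "eventually (\<lambda>w. k \<noteq> l \<longrightarrow> gg k w \<noteq> gg l w) (nhds 0)" if "k < d" "l < d" for k l
  proof (cases "k = l")
    case False
    have c1: "isCont (gg k) 0" "isCont (gg l) 0" using gg that DERIV_isCont by blast+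
    have "((\<lambda>w. gg k w - gg l w) \<longlongrightarrow> x k - x l) (at 0)"
      using c1 gg that unfolding isCont_def by (metis tendsto_diff)
    moreover have "x k - x l \<noteq> 0" using dist that False by simp
    ultimately have "eventually (\<lambda>w. gg k w - gg l w \<noteq> 0) (at 0)" by (rule tendsto_imp_eventually_ne)
    moreover have "gg k 0 - gg l 0 \<noteq> 0" using gg that dist False by simp
    ultimately have "eventually (\<lambda>w. gg k w - gg l w \<noteq> 0) (nhds 0)"
      unfolding eventually_nhds_conv_at by simp
    then show ?thesis by (rule eventually_mono) simp
  qed simp
  have ev2: "eventually (\<lambda>w. \<forall>k\<in>{..<d}. \<forall>l\<in>{..<d}. k \<noteq> l \<longrightarrow> gg k w \<noteq> gg l w) (nhds 0)"
    using ne_pair by (intro eventually_ball_finite ballI) auto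
  have evE: "eventually E (nhds 0)" unfolding E_def using ev1 ev2 by (rule eventually_conj)
  define w where "w t = complex_of_real (t - a j)" for t
  have wlim: "filterlim w (nhds 0) (nhds (a j))"
  proof -
    have "((\<lambda>t. complex_of_real (t - a j)) \<longlongrightarrow> complex_of_real (a j - a j)) (nhds (a j))"
      by (intro tendsto_of_real tendsto_diff filterlim_ident tendsto_const)
    then show ?thesis unfolding w_def by simp
  qed
  have evEt: "eventually (\<lambda>t. E (w t)) (nhds (a j))" using wlim evE filterlim_iff by blast
  define psi where "psi k v = poly (pderiv Pc) (gg k v) + v * poly (pderiv Mj) (gg k v)" for k v
  define Phi where "Phi v = c * (\<Prod>k<d. psi k v)" for v
  have Fe: "disc d (a(j:=t)) = Re (Phi (w t))" if Et: "E (w t)" for t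
  proof -
    define b where "b = a(j:=t)"
    define rl where "rl = roots_list d b"
    define ys where "ys = map (\<lambda>k. gg k (w t)) [0..<d]"
    have Qt: "PC d b = Pc + smult (w t) Mj" unfolding b_def Pc_def Mj_def w_def by (rule PC_upd[OF j])
    have dQ: "poly (pderiv (PC d b)) z = poly (pderiv Pc) z + w t * poly (pderiv Mj) z" for z
      unfolding Qt by (simp add: pderiv_add pderiv_smult)
    have dys: "distinct ys" unfolding ys_def distinct_conv_nth using Et unfolding E_def by auto
    have rys: "\<forall>y\<in>set ys. poly (PC d b) y = 0"
      using Et unfolding ys_def E_def Qt Mj_def by (auto simp: poly_monom)
    have ms: "mset rl = mset ys"
      using mset_roots_eq[OF roots_list(2)[of d b] dys rys] roots_list(1)[of d b] unfolding rl_def ys_def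
      by simp
    have "disc d b = Re (c * (\<Prod>k<d. poly (pderiv (PC d b)) (rl ! k)))"
      unfolding c_def rl_def by (rule disc_eq)
    also have "(\<Prod>k<d. poly (pderiv (PC d b)) (rl ! k)) = (\<Prod>k<d. poly (pderiv (PC d b)) (ys ! k))"
      by (rule prod_nth_mset) (use ms roots_list(1)[of d b] in \<open>auto simp: rl_def ys_def\<close>)
    also have "\<dots> = (\<Prod>k<d. psi k (w t))"
      by (intro prod.cong refl) (simp add: ys_def dQ psi_def)
    finally show ?thesis unfolding b_def Phi_def .
  qed
  have dpsi: "(psi k has_field_derivative (q k * (-(x k ^ j) / p k) + poly (pderiv Mj) (x k))) (at 0)"
    if "k < d" for k
  proof -
    have g: "gg k 0 = x k" "(gg k has_field_derivative (-(x k^j) / p k)) (at 0)" using gg that by auto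
    have d1: "((\<lambda>v. poly (pderiv Pc) (gg k v)) has_field_derivative poly (pderiv (pderiv Pc)) (gg k 0) * (-(x k^j) / p k)) (at 0)"
      by (rule DERIV_chain2[OF poly_DERIV g(2)])
    have d2: "((\<lambda>v. poly (pderiv Mj) (gg k v)) has_field_derivative poly (pderiv (pderiv Mj)) (gg k 0) * (-(x k^j) / p k)) (at 0)"
      by (rule DERIV_chain2[OF poly_DERIV g(2)])
    have d3: "((\<lambda>v. v * poly (pderiv Mj) (gg k v)) has_field_derivative
        (1 * poly (pderiv Mj) (gg k 0) + poly (pderiv (pderiv Mj)) (gg k 0) * (-(x k^j) / p k) * 0)) (at 0)"
      using DERIV_mult[OF DERIV_ident d2] by simp
    have "(psi k has_field_derivative (poly (pderiv (pderiv Pc)) (gg k 0) * (-(x k^j) / p k) +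
        (1 * poly (pderiv Mj) (gg k 0) + poly (pderiv (pderiv Mj)) (gg k 0) * (-(x k^j) / p k) * 0))) (at 0)"
      unfolding psi_def by (rule DERIV_add[OF d1 d3])
    then show ?thesis using g(1) unfolding q_x Pc_def by simp
  qed
  have psi0: "psi k 0 = p k" if "k < d" for k using gg that unfolding psi_def p_x Pc_def by simp
  define D where "D = c * ((\<Prod>k<d. p k) * (\<Sum>k<d. (q k * (-(x k ^ j) / p k) + poly (pderiv Mj) (x k)) / p k))"
  have dPhi: "(Phi has_field_derivative D) (at 0)"
  proof -
    have "((\<lambda>v. \<Prod>k<d. psi k v) has_field_derivative
        ((\<Prod>k<d. psi k 0) * (\<Sum>k<d. (q k * (-(x k ^ j) / p k) + poly (pderiv Mj) (x k)) / psi k 0))) (at 0)"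
      by (rule has_field_derivative_prod'[of "{..<d}" psi 0]) (use psi0 pnz dpsi in auto)
    then have "((\<lambda>v. \<Prod>k<d. psi k v) has_field_derivative
        ((\<Prod>k<d. p k) * (\<Sum>k<d. (q k * (-(x k ^ j) / p k) + poly (pderiv Mj) (x k)) / p k))) (at 0)"
    proof -
      have e1: "(\<Prod>k<d. psi k 0) = (\<Prod>k<d. p k)" by (rule prod.cong) (auto simp: psi0)
      have e2: "(\<Sum>k<d. (q k * (-(x k ^ j) / p k) + poly (pderiv Mj) (x k)) / psi k 0)
         = (\<Sum>k<d. (q k * (-(x k ^ j) / p k) + poly (pderiv Mj) (x k)) / p k)" by (rule sum.cong) (auto simp: psi0)
      show ?thesis using \<open>((\<lambda>v. \<Prod>k<d. psi k v) has_field_derivative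
        ((\<Prod>k<d. psi k 0) * (\<Sum>k<d. (q k * (-(x k ^ j) / p k) + poly (pderiv Mj) (x k)) / psi k 0))) (at 0)\<close>
        unfolding e1 e2 .
    qed
    then show ?thesis unfolding Phi_def D_def by (rule DERIV_cmult)
  qed
  define Phi2 where "Phi2 z = Phi (z - complex_of_real (a j))" for z
  have dPhi2: "(Phi2 has_field_derivative D) (at (complex_of_real (a j)))"
  proof -
    have "((\<lambda>z. z - complex_of_real (a j)) has_field_derivative 1) (at (complex_of_real (a j)))"
      using DERIV_diff[OF DERIV_ident DERIV_const] by simp
    moreover have "(Phi has_field_derivative D) (at (complex_of_real (a j) - complex_of_real (a j)))"
      using dPhi by simp
    ultimately show ?thesis unfolding Phi2_def using DERIV_chain2 by (metis mult_1_right)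
  qed
  have "((\<lambda>t. Phi2 (of_real t)) has_vector_derivative D) (at (a j))"
    using has_vector_derivative_real_field[OF dPhi2] .
  then have "((\<lambda>t. Re (Phi2 (of_real t))) has_vector_derivative Re D) (at (a j))"
    by (rule bounded_linear.has_vector_derivative[OF bounded_linear_Re])
  then have dR: "((\<lambda>t. Re (Phi (w t))) has_real_derivative Re D) (at (a j))"
    unfolding has_real_derivative_iff_has_vector_derivative Phi2_def w_def by (simp add: of_real_diff)
  have "((\<lambda>t. disc d (a(j:=t))) has_real_derivative Re D) (at (a j))"
  proof (subst DERIV_cong_ev[OF refl _ refl])
    show "eventually (\<lambda>t. disc d (a(j:=t)) = Re (Phi (w t))) (nhds (a j))"
      using evEt by (rule eventually_mono) (rule Fe)
  qed (rule dR)
  then have "disc_partial d a j = Re D" unfolding disc_partial_def by (rule DERIV_imp_deriv)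
  then show ?thesis unfolding D_def Mj_def by (simp add: mult.assoc)
qed




lemma pnz_lemma:
  assumes nz: "disc d a \<noteq> 0" and k: "k < d"
  shows "poly (pderiv (PC d a)) (roots_list d a ! k) \<noteq> 0"
proof -
  have disc0: "disc d a = Re ((-1)^(d*(d-1) div 2) * (\<Prod>k<d. poly (pderiv (PC d a)) (roots_list d a ! k)))"
    by (rule disc_eq)
  have "(\<Prod>k<d. poly (pderiv (PC d a)) (roots_list d a ! k)) \<noteq> 0"
  proof
    assume h: "(\<Prod>k<d. poly (pderiv (PC d a)) (roots_list d a ! k)) = 0"
    have "disc d a = 0" using disc0 unfolding h by simp
    then show False using nz by simp
  qed
  then show ?thesis using k by (auto simp: prod_zero_iff)
qed

lemma main_nonroot:
  assumes Gamma: "\<forall>X Y :: real. (Y - X) * (\<Sum>i<d. \<Sum>j<d. G i j * X ^ i * Y ^ j)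
      = poly (pderiv (Pol d a)) X * poly (Pol d a) Y - poly (pderiv (Pol d a)) Y * poly (Pol d a) X"
    and nz: "disc d a \<noteq> 0" and PX: "poly (Pol d a) X \<noteq> 0"
  shows "(\<Sum>i<d. \<Sum>j<d. G i j * X ^ i * disc_partial d a j) = - poly (pderiv (pderiv (Pol d a))) X * disc d a"
proof -
  define x where "x k = roots_list d a ! k" for k
  define p where "p k = poly (pderiv (PC d a)) (x k)" for k
  define q where "q k = poly (pderiv (pderiv (PC d a))) (x k)" for k
  define c where "c = (-1::complex)^(d*(d-1) div 2)"
  define A where "A = c * (\<Prod>k<d. p k)"
  define S where "S j = (\<Sum>k<d. (q k * (-(x k ^ j) / p k) + poly (pderiv (monom 1 j)) (x k)) / p k)" for j
  have dp: "disc_partial d a j = Re (A * S j)" if "j < d" for j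
    using partial_formula[OF nz that] unfolding A_def S_def c_def p_def q_def x_def .
  have dA: "disc d a = Re A" unfolding A_def c_def p_def x_def by (rule disc_eq)
  have KI: "(\<Sum>j<d. of_real (\<Sum>i<d. G i j * X^i) * S j) = - of_real (poly (pderiv (pderiv (Pol d a))) X)"
    unfolding S_def
    by (rule key_identity[OF Gamma _ _ PX, of x, unfolded p_def[symmetric] q_def[symmetric]])
       (use pnz_lemma[OF nz] PC_nth[of d a] in \<open>auto simp: x_def p_def\<close>)
  have "(\<Sum>i<d. \<Sum>j<d. G i j * X ^ i * disc_partial d a j) = (\<Sum>j<d. (\<Sum>i<d. G i j * X ^ i) * disc_partial d a j)"
    by (subst sum.swap) (simp add: sum_distrib_right)
  also have "\<dots> = (\<Sum>j<d. Re (A * (of_real (\<Sum>i<d. G i j * X ^ i) * S j)))"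
  proof (intro sum.cong refl)
    fix j assume "j \<in> {..<d}"
    then show "(\<Sum>i<d. G i j * X ^ i) * disc_partial d a j = Re (A * (of_real (\<Sum>i<d. G i j * X ^ i) * S j))"
    proof -
      have eq: "A * (complex_of_real (\<Sum>i<d. G i j * X ^ i) * S j) = complex_of_real (\<Sum>i<d. G i j * X ^ i) * (A * S j)"
        by (simp only: mult.left_commute)
      have re: "Re (complex_of_real r * z) = r * Re z" for r z by simp
      show ?thesis unfolding eq re using dp[of j] \<open>j \<in> {..<d}\<close> by simp
    qed
  qed
  also have "\<dots> = Re (A * (\<Sum>j<d. of_real (\<Sum>i<d. G i j * X^i) * S j))"
    by (simp add: sum_distrib_left Re_sum)
  also have "\<dots> = - poly (pderiv (pderiv (Pol d a))) X * disc d a"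
    unfolding KI dA by simp
  finally show ?thesis .
qed




theorem proposition5p3:
  fixes d :: nat and a :: "nat \<Rightarrow> real" and G :: "nat \<Rightarrow> nat \<Rightarrow> real"
  assumes Gamma: "\<forall>X Y :: real. (Y - X) * (\<Sum>i<d. \<Sum>j<d. G i j * X ^ i * Y ^ j)
      = poly (pderiv (Pol d a)) X * poly (Pol d a) Y - poly (pderiv (Pol d a)) Y * poly (Pol d a) X"
    and nz: "disc d a \<noteq> 0"
  shows "\<forall>X :: real. (\<Sum>i<d. \<Sum>j<d. G i j * X ^ i * disc_partial d a j) / disc d a
      = - poly (pderiv (pderiv (Pol d a))) X"
proof
  fix X :: real
  define R where "R = (\<Sum>i<d. monom (\<Sum>j<d. G i j * disc_partial d a j) i) + smult (disc d a) (pderiv (pderiv (Pol d a)))"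
  have polyR: "poly R Y = (\<Sum>i<d. \<Sum>j<d. G i j * Y ^ i * disc_partial d a j) + disc d a * poly (pderiv (pderiv (Pol d a))) Y" for Y
  proof -
    have "(\<Sum>i<d. (\<Sum>j<d. G i j * disc_partial d a j) * Y ^ i) = (\<Sum>i<d. \<Sum>j<d. G i j * Y ^ i * disc_partial d a j)"
      by (intro sum.cong refl) (simp add: sum_distrib_left sum_distrib_right mult_ac)
    then show ?thesis by (simp add: R_def poly_sum poly_monom)
  qed
  have P0: "Pol d a \<noteq> 0"
  proof
    assume "Pol d a = 0"
    then have "coeff (Pol d a) d = 0" by simp
    then show False by (simp add: coeff_Pol)
  qed
  have R0: "R = 0"
  proof (rule ccontr)
    assume "R \<noteq> 0"
    then have f1: "finite {Y. poly R Y = 0}" by (rule poly_roots_finite)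
    have f2: "finite {Y. poly (Pol d a) Y = 0}" using P0 by (rule poly_roots_finite)
    have "UNIV \<subseteq> {Y. poly R Y = 0} \<union> {Y. poly (Pol d a) Y = 0}"
    proof
      fix Y :: real
      show "Y \<in> {Y. poly R Y = 0} \<union> {Y. poly (Pol d a) Y = 0}"
      proof (cases "poly (Pol d a) Y = 0")
        case False
        then show ?thesis using main_nonroot[OF Gamma nz False] polyR[of Y] by simp
      qed simp
    qed
    then have "finite (UNIV :: real set)" using f1 f2 finite_subset by blast
    then show False using infinite_UNIV_char_0 by blast
  qed
  have h: "(\<Sum>i<d. \<Sum>j<d. G i j * X ^ i * disc_partial d a j) = - poly (pderiv (pderiv (Pol d a))) X * disc d a"
  proof -
    have "(\<Sum>i<d. \<Sum>j<d. G i j * X ^ i * disc_partial d a j) + disc d a * poly (pderiv (pderiv (Pol d a))) X = 0"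
      using polyR[of X] R0 by simp
    then show ?thesis by (simp add: mult.commute eq_neg_iff_add_eq_0)
  qed
  show "(\<Sum>i<d. \<Sum>j<d. G i j * X ^ i * disc_partial d a j) / disc d a = - poly (pderiv (pderiv (Pol d a))) X"
    unfolding h using nz by simp
qed


end
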